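(* For all integers $b,k\ge0$ and $i\in\{1,2,\dots,b-1\}$, $$\sum_{a=0}^{k}\frac{[a+i-1]!\,[b-i+a-1]!}{[a]!\,[a+b]!}=\frac{1}{[i]\,[b-i]}\cdot\frac{[i+k]!\,[b+k-i]!}{[k]!\,[b+k]!},$$ as an identity of rational functions of $q$.
   Context: For an indeterminate (or complex number) $q$ and $m\in\mathbb{Z}$, $[m]=\frac{q^m-q^{-m}}{q-q^{-1}}$ is the quantum integer and $[m]!=[1][2]\cdots[m]$, $[0]!=1$. *)

theory Defs
  imports "HOL-Computational_Algebra.Polynomial" "HOL-Computational_Algebra.Fraction_Field"
begin

definition qint :: "'a::field \<Rightarrow> int \<Rightarrow> 'a" where
  "qint q m = (q powi m - q powi (-m)) / (q - inverse q)"

definition qfact :: "'a::field \<Rightarrow> nat \<Rightarrow> 'a" where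
  "qfact q n = (\<Prod>j=1..n. qint q (int j))"

definition qvar :: "rat poly fract" where
  "qvar = Fract [:0, 1:] 1"

end

theory Submission
  imports Defs
begin

lemma qint_id:
  fixes q :: "'a::field"
  assumes "q \<noteq> 0"
  shows "qint q (x+m) * qint q (y+m) - qint q m * qint q (x+y+m) = qint q x * qint q y"
proof -
  have e: "\<And>u v. q powi u * q powi v = q powi (u+v)" using assms by (simp add: power_int_add)
  have "(q powi (x+m) - q powi (-(x+m))) * (q powi (y+m) - q powi (-(y+m)))
      - (q powi m - q powi (-m)) * (q powi (x+y+m) - q powi (-(x+y+m)))
      = (q powi x - q powi (-x)) * (q powi y - q powi (-y))"
    by (simp add: algebra_simps e)
  then show ?thesis unfolding qint_def by (simp add: field_simps diff_divide_distrib[symmetric] power2_eq_square)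
qed

lemma qvar_pow: "qvar ^ n = Fract (monom 1 n) 1"
  unfolding qvar_def by (induction n) (auto simp: monom_Suc mult_ac One_fract_def)
  
lemma qvar_nz: "qvar \<noteq> 0" unfolding qvar_def by (simp add: eq_fract Zero_fract_def)

lemma qvar_pow_ne1: "n > 0 \<Longrightarrow> qvar ^ n \<noteq> 1"
  unfolding qvar_pow by (simp add: One_fract_def eq_fract monom_eq_1_iff)

lemma qint_nz:
  fixes q :: "'a::field"
  assumes q0: "q \<noteq> 0" and r: "\<And>n::nat. n > 0 \<Longrightarrow> q ^ n \<noteq> 1" and n: "n > 0"
  shows "qint q (int n) \<noteq> 0"
proof
  assume "qint q (int n) = 0"
  then have "q ^ n - inverse (q ^ n) = 0 \<or> q - inverse q = 0"
    unfolding qint_def by (simp add: power_int_minus)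
  then have "q ^ n * q ^ n = 1 \<or> q * q = 1" using q0 by (auto simp: field_simps)
  then have "q ^ (2*n) = 1 \<or> q ^ 2 = 1" by (simp add: power_add[symmetric] mult_2 power2_eq_square)
  with r n show False by auto
qed

lemma qfact_Suc: "qfact q (Suc n) = qfact q n * qint q (int (Suc n))"
  unfolding qfact_def by (simp add: prod.nat_ivl_Suc' mult.commute)

lemma qfact_nz:
  fixes q :: "'a::field"
  assumes "\<And>n::nat. n > 0 \<Longrightarrow> qint q (int n) \<noteq> 0"
  shows "qfact q n \<noteq> 0"
  unfolding qfact_def using assms by (auto simp: prod_zero_iff)

lemma main:
  fixes q :: "'a::field"
  assumes q0: "q \<noteq> 0" and nz: "\<And>n::nat. n > 0 \<Longrightarrow> qint q (int n) \<noteq> 0"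
    and i: "i \<ge> 1" and c: "c \<ge> 1"
  shows "(\<Sum>a=0..k. (qfact q (a + i - 1) * qfact q (a + c - 1)) / (qfact q a * qfact q (a + i + c)))
     = 1 / (qint q (int i) * qint q (int c)) * ((qfact q (i + k) * qfact q (c + k)) / (qfact q k * qfact q (i + c + k)))"
proof (induction k)
  case 0
  obtain i' where i': "i = Suc i'" using i by (cases i) auto
  obtain c' where c': "c = Suc c'" using c by (cases c) auto
  show ?case using nz[of i] nz[of c] qfact_nz[OF nz]
    by (simp add: i' c' qfact_Suc field_simps del: of_nat_Suc)
next
  case (Suc k)
  have id: "qint q (int i + int (Suc k)) * qint q (int c + int (Suc k)) - qint q (int (Suc k)) * qint q (int i + int c + int (Suc k))
     = qint q (int i) * qint q (int c)" by (rule qint_id[OF q0])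
  have e1: "Suc k + i - 1 = i + k" "Suc k + c - 1 = c + k" "Suc k + i + c = Suc (i + c + k)"
    "i + Suc k = Suc (i + k)" "c + Suc k = Suc (c+k)" "i + c + Suc k = Suc (i + c + k)" using i c by auto
  have n1: "qint q (int i) \<noteq> 0" "qint q (int c) \<noteq> 0" using nz i c by auto
  have n2: "qint q (int (Suc k)) \<noteq> 0" "qint q (int (Suc (i+c+k))) \<noteq> 0" by (rule nz, simp)+
  have key: "qint q (int (Suc (i+k))) * qint q (int (Suc (c+k)))
      = qint q (int (Suc k)) * qint q (int (Suc (i+c+k))) + qint q (int i) * qint q (int c)"
    using id by (simp add: algebra_simps)
  define A where "A = qint q (int (Suc (i+k)))"
  define B where "B = qint q (int (Suc (c+k)))"
  define X where "X = qint q (int (Suc k))"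
  define Y where "Y = qint q (int (Suc (i+c+k)))"
  define I where "I = qint q (int i)"
  define C where "C = qint q (int c)"
  define P where "P = qfact q (i+k)"
  define Q where "Q = qfact q (c+k)"
  define K where "K = qfact q k"
  define M where "M = qfact q (i+c+k)"
  have nzs: "I \<noteq> 0" "C \<noteq> 0" "X \<noteq> 0" "Y \<noteq> 0" "P \<noteq> 0" "Q \<noteq> 0" "K \<noteq> 0" "M \<noteq> 0"
    using n1 n2 qfact_nz[OF nz] unfolding I_def C_def X_def Y_def P_def Q_def K_def M_def by auto
  have key': "A * B = X * Y + I * C" using key unfolding A_def B_def X_def Y_def I_def C_def .
  have "1 / (I * C) * (P * Q / (K * M)) + P * Q / (K * X * (M * Y)) = 1 / (I * C) * (P * A * (Q * B) / (K * X * (M * Y)))"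
    using nzs apply (simp add: field_simps)
    apply (simp add: mult.assoc[symmetric] key')
    by (simp add: algebra_simps)
  then show ?case
    unfolding sum.atLeast0_atMost_Suc Suc e1 qfact_Suc
    unfolding A_def[symmetric] B_def[symmetric] X_def[symmetric] Y_def[symmetric] I_def[symmetric] C_def[symmetric]
      P_def[symmetric] Q_def[symmetric] K_def[symmetric] M_def[symmetric] .
qed

theorem lemmaA7:
  fixes b k i :: nat
  assumes "1 \<le> i" and "i \<le> b - 1"
  shows "(\<Sum>a=0..k. (qfact qvar (a + i - 1) * qfact qvar (b - i + a - 1))
                     / (qfact qvar a * qfact qvar (a + b)))
       = 1 / (qint qvar (int i) * qint qvar (int b - int i))
         * ((qfact qvar (i + k) * qfact qvar (b + k - i)) / (qfact qvar k * qfact qvar (b + k)))"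
proof -
  define c where "c = b - i"
  have c1: "c \<ge> 1" and b: "b = i + c" using assms unfolding c_def by auto
  have nz: "\<And>n::nat. n > 0 \<Longrightarrow> qint qvar (int n) \<noteq> 0"
    by (rule qint_nz[OF qvar_nz qvar_pow_ne1])
  have m: "\<And>a. b - i + a - 1 = a + c - 1" "\<And>a. a + b = a + i + c" "b + k - i = c + k"
    "int b - int i = int c" "qfact qvar (b + k) = qfact qvar (i + c + k)" using b by auto
  show ?thesis unfolding m using main[OF qvar_nz nz assms(1) c1, of k] .
qed

end
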